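(* Let $U:\mathbb{C}^*\to\mathbb{C}$ be a reasonable expansion with unique restrictions, between locally small categories, which has the expansion property. Assume that all morphisms in $\mathbb{C}$ are monomorphisms and that $\mathbb{C}^*$ is directed. Let $A\in\mathrm{Ob}(\mathbb{C})$, let $\mathcal{A}_1,\dots,\mathcal{A}_n\in U^{-1}(A)$ be distinct, and assume $t_i=t_{\mathbb{C}^*}(\mathcal{A}_i)\in\mathbb{N}$ for $i\in\{1,\dots,n\}$. Then $t_{\mathbb{C}}(A)\ge\sum_{i=1}^n t_i$.
   Context: Write $X\to Y$ if $\hom(X,Y)\ne\varnothing$; a category is directed if for all objects $A,B$ there is $C$ with $A\to C$, $B\to C$. An expansion of $\mathbb{C}$ is a category $\mathbb{C}^*$ with a functor $U:\mathbb{C}^*\to\mathbb{C}$ surjective on objects and injective on hom-sets; we regard $\hom_{\mathbb{C}^*}(\mathcal{A},\mathcal{B})\subseteq\hom_{\mathbb{C}}(U\mathcal{A},U\mathcal{B})$, and $U^{-1}(A)=\{\mathcal{A}:U(\mathcal{A})=A\}$. $U$ is reasonable if for every $e\in\hom(A,B)$ and $\mathcal{A}\in U^{-1}(A)$ there is $\mathcal{B}\in U^{-1}(B)$ with $e\in\hom(\mathcal{A},\mathcal{B})$; it has unique restrictions if for every $\mathcal{B}$ and $e\in\hom(A,U(\mathcal{B}))$ there is exactly one $\mathcal{A}\in U^{-1}(A)$ with $e\in\hom(\mathcal{A},\mathcal{B})$; it has the expansion property if for every $A\in\mathrm{Ob}(\mathbb{C})$ there is $B\in\mathrm{Ob}(\mathbb{C})$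 with $\mathcal{A}\to\mathcal{B}$ for all $\mathcal{A}\in U^{-1}(A)$, $\mathcal{B}\in U^{-1}(B)$. In a category $\mathbb{D}$: $C\to(B)^A_{k,t}$ means that for every $\chi:\hom(A,C)\to\{0,\dots,k-1\}$ there is $w\in\hom(B,C)$ with $|\chi(w\cdot\hom(A,B))|\le t$; $t_{\mathbb{D}}(A)$ is the least positive $n$ such that for all $k\ge2$ and all $B$ there is $C$ with $C\to(B)^A_{k,n}$, and $\infty$ otherwise. *)

theory Defs
  imports Main "HOL-Library.Extended_Nat"
begin

text \<open>A (locally small) category is presented by an object set Ob, hom-sets Hom A B,
  a composition cmp g f (g after f) and identities idm A.\<close>
definition category ::
  "'o set \<Rightarrow> ('o \<Rightarrow> 'o \<Rightarrow> 'm set) \<Rightarrow> ('m \<Rightarrow> 'm \<Rightarrow> 'm) \<Rightarrow> ('o \<Rightarrow> 'm) \<Rightarrow> bool" where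
  "category Ob Hom cmp idm \<longleftrightarrow>
     (\<forall>A\<in>Ob. idm A \<in> Hom A A) \<and>
     (\<forall>A\<in>Ob. \<forall>B\<in>Ob. \<forall>C\<in>Ob. \<forall>f g. f \<in> Hom A B \<longrightarrow> g \<in> Hom B C \<longrightarrow> cmp g f \<in> Hom A C) \<and>
     (\<forall>A\<in>Ob. \<forall>B\<in>Ob. \<forall>f \<in> Hom A B. cmp (idm B) f = f \<and> cmp f (idm A) = f) \<and>
     (\<forall>A\<in>Ob. \<forall>B\<in>Ob. \<forall>C\<in>Ob. \<forall>D\<in>Ob. \<forall>f g h. f \<in> Hom A B \<longrightarrow> g \<in> Hom B C \<longrightarrow> h \<in> Hom C D \<longrightarrow>
        cmp h (cmp g f) = cmp (cmp h g) f)"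

definition all_mono ::
  "'o set \<Rightarrow> ('o \<Rightarrow> 'o \<Rightarrow> 'm set) \<Rightarrow> ('m \<Rightarrow> 'm \<Rightarrow> 'm) \<Rightarrow> bool" where
  "all_mono Ob Hom cmp \<longleftrightarrow>
     (\<forall>X\<in>Ob. \<forall>A\<in>Ob. \<forall>B\<in>Ob. \<forall>f\<in>Hom A B. \<forall>g\<in>Hom X A. \<forall>h\<in>Hom X A.
        cmp f g = cmp f h \<longrightarrow> g = h)"

definition directed :: "'o set \<Rightarrow> ('o \<Rightarrow> 'o \<Rightarrow> 'm set) \<Rightarrow> bool" where
  "directed Ob Hom \<longleftrightarrow> (\<forall>A\<in>Ob. \<forall>B\<in>Ob. \<exists>C\<in>Ob. Hom A C \<noteq> {} \<and> Hom B C \<noteq> {})"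

text \<open>An expansion U of the category (Ob, Hom, cmp, idm): the expanded category has objects
  ObS, hom-sets HomS P Q regarded as subsets of Hom (U P) (U Q), with the composition and
  identities inherited from the base category (U acts as the inclusion on morphisms, so U is
  a functor injective on hom-sets); U is surjective on objects.\<close>
definition expansion ::
  "'o set \<Rightarrow> ('o \<Rightarrow> 'o \<Rightarrow> 'm set) \<Rightarrow> ('m \<Rightarrow> 'm \<Rightarrow> 'm) \<Rightarrow> ('o \<Rightarrow> 'm) \<Rightarrow>
   'p set \<Rightarrow> ('p \<Rightarrow> 'p \<Rightarrow> 'm set) \<Rightarrow> ('p \<Rightarrow> 'o) \<Rightarrow> bool" where
  "expansion Ob Hom cmp idm ObS HomS U \<longleftrightarrow>
     category Ob Hom cmp idm \<and>
     category ObS HomS cmp (\<lambda>P. idm (U P)) \<and>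
     U ` ObS = Ob \<and>
     (\<forall>P\<in>ObS. \<forall>Q\<in>ObS. HomS P Q \<subseteq> Hom (U P) (U Q))"

definition reasonable ::
  "'o set \<Rightarrow> ('o \<Rightarrow> 'o \<Rightarrow> 'm set) \<Rightarrow> 'p set \<Rightarrow> ('p \<Rightarrow> 'p \<Rightarrow> 'm set) \<Rightarrow> ('p \<Rightarrow> 'o) \<Rightarrow> bool" where
  "reasonable Ob Hom ObS HomS U \<longleftrightarrow>
     (\<forall>A\<in>Ob. \<forall>B\<in>Ob. \<forall>e\<in>Hom A B. \<forall>P\<in>ObS. U P = A \<longrightarrow>
        (\<exists>Q\<in>ObS. U Q = B \<and> e \<in> HomS P Q))"

definition unique_restrictions ::
  "'o set \<Rightarrow> ('o \<Rightarrow> 'o \<Rightarrow> 'm set) \<Rightarrow> 'p set \<Rightarrow> ('p \<Rightarrow> 'p \<Rightarrow> 'm set) \<Rightarrow> ('p \<Rightarrow> 'o) \<Rightarrow> bool" where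
  "unique_restrictions Ob Hom ObS HomS U \<longleftrightarrow>
     (\<forall>Q\<in>ObS. \<forall>A\<in>Ob. \<forall>e\<in>Hom A (U Q).
        (\<exists>!P. P \<in> ObS \<and> U P = A \<and> e \<in> HomS P Q))"

definition expansion_property ::
  "'o set \<Rightarrow> 'p set \<Rightarrow> ('p \<Rightarrow> 'p \<Rightarrow> 'm set) \<Rightarrow> ('p \<Rightarrow> 'o) \<Rightarrow> bool" where
  "expansion_property Ob ObS HomS U \<longleftrightarrow>
     (\<forall>A\<in>Ob. \<exists>B\<in>Ob. \<forall>P\<in>ObS. \<forall>Q\<in>ObS. U P = A \<longrightarrow> U Q = B \<longrightarrow> HomS P Q \<noteq> {})"

text \<open>C \<rightarrow> (B)^A_{k,t}: every colouring of hom(A,C) with k colours admits w in hom(B,C) such that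
  w \<cdot> hom(A,B) takes at most t colours.\<close>
definition ramsey_arrow ::
  "('o \<Rightarrow> 'o \<Rightarrow> 'm set) \<Rightarrow> ('m \<Rightarrow> 'm \<Rightarrow> 'm) \<Rightarrow> 'o \<Rightarrow> 'o \<Rightarrow> 'o \<Rightarrow> nat \<Rightarrow> nat \<Rightarrow> bool" where
  "ramsey_arrow Hom cmp C B A k t \<longleftrightarrow>
     (\<forall>\<chi> :: 'm \<Rightarrow> nat. (\<forall>f\<in>Hom A C. \<chi> f < k) \<longrightarrow>
        (\<exists>w\<in>Hom B C. card (\<chi> ` ((\<lambda>f. cmp w f) ` Hom A B)) \<le> t))"

definition ramsey_property_deg ::
  "'o set \<Rightarrow> ('o \<Rightarrow> 'o \<Rightarrow> 'm set) \<Rightarrow> ('m \<Rightarrow> 'm \<Rightarrow> 'm) \<Rightarrow> 'o \<Rightarrow> nat \<Rightarrow> bool" where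
  "ramsey_property_deg Ob Hom cmp A n \<longleftrightarrow>
     (\<forall>k\<ge>2. \<forall>B\<in>Ob. \<exists>C\<in>Ob. ramsey_arrow Hom cmp C B A k n)"

definition small_ramsey_degree ::
  "'o set \<Rightarrow> ('o \<Rightarrow> 'o \<Rightarrow> 'm set) \<Rightarrow> ('m \<Rightarrow> 'm \<Rightarrow> 'm) \<Rightarrow> 'o \<Rightarrow> enat" where
  "small_ramsey_degree Ob Hom cmp A =
     (if \<exists>n>0. ramsey_property_deg Ob Hom cmp A n
      then enat (LEAST n. n > 0 \<and> ramsey_property_deg Ob Hom cmp A n)
      else \<infinity>)"

end

theory Submission
  imports Defs
begin

lemma cat_comp:
  "category Ob Hom cmp idm \<Longrightarrow> A \<in> Ob \<Longrightarrow> B \<in> Ob \<Longrightarrow> C \<in> Ob \<Longrightarrow> f \<in> Hom A B \<Longrightarrow> g \<in> Hom B C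
   \<Longrightarrow> cmp g f \<in> Hom A C"
  unfolding category_def by blast

lemma cat_assoc:
  "category Ob Hom cmp idm \<Longrightarrow> A \<in> Ob \<Longrightarrow> B \<in> Ob \<Longrightarrow> C \<in> Ob \<Longrightarrow> D \<in> Ob \<Longrightarrow>
   f \<in> Hom A B \<Longrightarrow> g \<in> Hom B C \<Longrightarrow> h \<in> Hom C D \<Longrightarrow> cmp h (cmp g f) = cmp (cmp h g) f"
  unfolding category_def by blast

lemma cat_id:
  "category Ob Hom cmp idm \<Longrightarrow> A \<in> Ob \<Longrightarrow> idm A \<in> Hom A A"
  unfolding category_def by blast

lemma cat_idr:
  "category Ob Hom cmp idm \<Longrightarrow> A \<in> Ob \<Longrightarrow> B \<in> Ob \<Longrightarrow> f \<in> Hom A B \<Longrightarrow> cmp f (idm A) = f"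
  unfolding category_def by blast

definition good :: "'p set \<Rightarrow> ('p \<Rightarrow> 'p \<Rightarrow> 'm set) \<Rightarrow> ('m \<Rightarrow> 'm \<Rightarrow> 'm) \<Rightarrow> 'p \<Rightarrow> nat \<Rightarrow> 'p \<Rightarrow> bool" where
  "good ObS HomS cmp P t B \<longleftrightarrow> (\<exists>k. \<forall>C\<in>ObS. \<exists>\<chi>::'m \<Rightarrow> nat. (\<forall>f\<in>HomS P C. \<chi> f < k) \<and>
      (\<forall>w\<in>HomS B C. t \<le> card (\<chi> ` ((\<lambda>f. cmp w f) ` HomS P B))))"

lemma good_mono:
  fixes HomS :: "'p \<Rightarrow> 'p \<Rightarrow> 'm set"
  assumes cat: "category ObS HomS cmp idS" and P: "P \<in> ObS" and B: "B \<in> ObS" and B': "B' \<in> ObS"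
    and h: "h \<in> HomS B B'" and g: "good ObS HomS cmp P t B"
  shows "good ObS HomS cmp P t B'"
proof -
  from g obtain k where k: "\<forall>C\<in>ObS. \<exists>\<chi>::'m \<Rightarrow> nat. (\<forall>f\<in>HomS P C. \<chi> f < k) \<and>
      (\<forall>w\<in>HomS B C. t \<le> card (\<chi> ` ((\<lambda>f. cmp w f) ` HomS P B)))"
    unfolding good_def by blast
  have "\<forall>C\<in>ObS. \<exists>\<chi>::'m \<Rightarrow> nat. (\<forall>f\<in>HomS P C. \<chi> f < k) \<and>
      (\<forall>w\<in>HomS B' C. t \<le> card (\<chi> ` ((\<lambda>f. cmp w f) ` HomS P B')))"
  proof
    fix C assume C: "C \<in> ObS"
    from k C obtain \<chi> :: "'m \<Rightarrow> nat" where ch1: "\<forall>f\<in>HomS P C. \<chi> f < k"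
      and ch2: "\<forall>w\<in>HomS B C. t \<le> card (\<chi> ` ((\<lambda>f. cmp w f) ` HomS P B))" by blast
    have "\<forall>w\<in>HomS B' C. t \<le> card (\<chi> ` ((\<lambda>f. cmp w f) ` HomS P B'))"
    proof
      fix w assume w: "w \<in> HomS B' C"
      have wh: "cmp w h \<in> HomS B C" using cat_comp[OF cat B B' C h w] .
      have sub: "\<chi> ` ((\<lambda>f. cmp (cmp w h) f) ` HomS P B) \<subseteq> \<chi> ` ((\<lambda>f. cmp w f) ` HomS P B')"
      proof
        fix x assume "x \<in> \<chi> ` ((\<lambda>f. cmp (cmp w h) f) ` HomS P B)"
        then obtain f where f: "f \<in> HomS P B" and x: "x = \<chi> (cmp (cmp w h) f)" by blast
        have "cmp (cmp w h) f = cmp w (cmp h f)" using cat_assoc[OF cat P B B' C f h w] by simp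
        moreover have "cmp h f \<in> HomS P B'" using cat_comp[OF cat P B B' f h] .
        ultimately show "x \<in> \<chi> ` ((\<lambda>f. cmp w f) ` HomS P B')" using x by blast
      qed
      have fin: "finite (\<chi> ` ((\<lambda>f. cmp w f) ` HomS P B'))"
      proof (rule finite_subset[of _ "{..<k}"])
        show "\<chi> ` ((\<lambda>f. cmp w f) ` HomS P B') \<subseteq> {..<k}"
          using ch1 cat_comp[OF cat P B' C _ w] by auto
      qed simp
      have "t \<le> card (\<chi> ` ((\<lambda>f. cmp (cmp w h) f) ` HomS P B))" using ch2 wh by blast
      also have "\<dots> \<le> card (\<chi> ` ((\<lambda>f. cmp w f) ` HomS P B'))" using card_mono[OF fin sub] .
      finally show "t \<le> card (\<chi> ` ((\<lambda>f. cmp w f) ` HomS P B'))" .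
    qed
    then show "\<exists>\<chi>::'m \<Rightarrow> nat. (\<forall>f\<in>HomS P C. \<chi> f < k) \<and>
      (\<forall>w\<in>HomS B' C. t \<le> card (\<chi> ` ((\<lambda>f. cmp w f) ` HomS P B')))" using ch1 by blast
  qed
  then show ?thesis unfolding good_def by blast
qed

lemma good_exists:
  fixes HomS :: "'p \<Rightarrow> 'p \<Rightarrow> 'm set"
  assumes cat: "category ObS HomS cmp idS" and P: "P \<in> ObS"
    and t: "small_ramsey_degree ObS HomS cmp P = enat t"
  shows "\<exists>B\<in>ObS. good ObS HomS cmp P t B"
proof -
  have ex: "\<exists>n>0. ramsey_property_deg ObS HomS cmp P n"
    using t unfolding small_ramsey_degree_def by (auto split: if_splits)
  then have tdef: "t = (LEAST n. n > 0 \<and> ramsey_property_deg ObS HomS cmp P n)"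
    using t unfolding small_ramsey_degree_def by auto
  have tpos: "t > 0" using LeastI_ex[OF ex] tdef by simp
  show ?thesis
  proof (cases "t = 1")
    case True
    have "good ObS HomS cmp P t P"
      unfolding good_def
    proof (intro exI[of _ 1] ballI exI[of _ "\<lambda>_. 0"] conjI)
      fix C w assume C: "C \<in> ObS" and w: "w \<in> HomS P C"
      have "cmp w (idS P) \<in> (\<lambda>f. cmp w f) ` HomS P P" using cat_id[OF cat P] by blast
      then have "(\<lambda>f. cmp w f) ` HomS P P \<noteq> {}" by blast
      then have "(\<lambda>_. 0::nat) ` ((\<lambda>f. cmp w f) ` HomS P P) = {0}" by blast
      then show "t \<le> card ((\<lambda>_. 0::nat) ` ((\<lambda>f. cmp w f) ` HomS P P))" using True by simp
    qed simp
    then show ?thesis using P by blast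
  next
    case False
    then have "t - 1 > 0" "t - 1 < t" using tpos by auto
    then have "\<not> ramsey_property_deg ObS HomS cmp P (t - 1)"
      using not_less_Least[of "t - 1" "\<lambda>n. n > 0 \<and> ramsey_property_deg ObS HomS cmp P n"] tdef
      by auto
    then obtain k B where k: "k \<ge> 2" and B: "B \<in> ObS"
      and nr: "\<forall>C\<in>ObS. \<not> ramsey_arrow HomS cmp C B P k (t - 1)"
      unfolding ramsey_property_deg_def by blast
    have "good ObS HomS cmp P t B"
      unfolding good_def
    proof (intro exI[of _ k] ballI)
      fix C assume C: "C \<in> ObS"
      from nr C obtain \<chi> :: "'m \<Rightarrow> nat" where c1: "\<forall>f\<in>HomS P C. \<chi> f < k"
        and c2: "\<forall>w\<in>HomS B C. \<not> card (\<chi> ` ((\<lambda>f. cmp w f) ` HomS P B)) \<le> t - 1"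
        unfolding ramsey_arrow_def by blast
      have "\<forall>w\<in>HomS B C. t \<le> card (\<chi> ` ((\<lambda>f. cmp w f) ` HomS P B))"
        using c2 by fastforce
      then show "\<exists>\<chi>::'m \<Rightarrow> nat. (\<forall>f\<in>HomS P C. \<chi> f < k) \<and>
        (\<forall>w\<in>HomS B C. t \<le> card (\<chi> ` ((\<lambda>f. cmp w f) ` HomS P B)))" using c1 by blast
    qed
    then show ?thesis using B by blast
  qed
qed

lemma directed_upper:
  assumes cat: "category ObS HomS cmp idS" and dir: "directed ObS HomS" and ne: "ObS \<noteq> {}"
    and fin: "finite I"
  shows "(\<forall>i\<in>I. B i \<in> ObS) \<Longrightarrow> \<exists>Bs\<in>ObS. \<forall>i\<in>I. HomS (B i) Bs \<noteq> {}"
  using fin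
proof (induction I rule: finite_induct)
  case empty
  then show ?case using ne by auto
next
  case (insert x F)
  then obtain Bs where Bs: "Bs \<in> ObS" and h: "\<forall>i\<in>F. HomS (B i) Bs \<noteq> {}" by auto
  have Bx: "B x \<in> ObS" using insert by auto
  from dir Bx Bs obtain C where C: "C \<in> ObS" and c1: "HomS (B x) C \<noteq> {}" and c2: "HomS Bs C \<noteq> {}"
    unfolding directed_def by blast
  from c2 obtain g where g: "g \<in> HomS Bs C" by blast
  have "\<forall>i\<in>F. HomS (B i) C \<noteq> {}"
  proof
    fix i assume i: "i \<in> F"
    from h i obtain f where f: "f \<in> HomS (B i) Bs" by blast
    have "B i \<in> ObS" using insert i by auto
    from cat_comp[OF cat this Bs C f g] show "HomS (B i) C \<noteq> {}" by blast
  qed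
  then show ?case using C c1 by blast
qed

lemma main_bound:
  fixes Ob :: "'o set" and Hom :: "'o \<Rightarrow> 'o \<Rightarrow> 'm set" and cmp :: "'m \<Rightarrow> 'm \<Rightarrow> 'm"
    and idm :: "'o \<Rightarrow> 'm" and ObS :: "'p set" and HomS :: "'p \<Rightarrow> 'p \<Rightarrow> 'm set"
    and U :: "'p \<Rightarrow> 'o" and A :: 'o and n :: nat and \<A> :: "nat \<Rightarrow> 'p"
  assumes ex: "expansion Ob Hom cmp idm ObS HomS U"
    and ur: "unique_restrictions Ob Hom ObS HomS U"
    and ep: "expansion_property Ob ObS HomS U"
    and A: "A \<in> Ob"
    and AA: "\<forall>i\<in>{1..n}. \<A> i \<in> ObS \<and> U (\<A> i) = A"
    and inj: "inj_on \<A> {1..n}"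
    and Bs: "Bs \<in> ObS"
    and gd: "\<forall>i\<in>{1..n}. good ObS HomS cmp (\<A> i) (tt i) Bs"
    and rp: "ramsey_property_deg Ob Hom cmp A t"
  shows "(\<Sum>i\<in>{1..n}. tt i) \<le> t"
proof -
  have cat: "category Ob Hom cmp idm" and catS: "category ObS HomS cmp (\<lambda>P. idm (U P))"
    and UOb: "U ` ObS = Ob" and sub: "\<forall>P\<in>ObS. \<forall>Q\<in>ObS. HomS P Q \<subseteq> Hom (U P) (U Q)"
    using ex unfolding expansion_def by auto
  from gd obtain kk where kk: "\<forall>i\<in>{1..n}. \<forall>C\<in>ObS. \<exists>\<chi>::'m \<Rightarrow> nat. (\<forall>f\<in>HomS (\<A> i) C. \<chi> f < kk i) \<and>
      (\<forall>w\<in>HomS Bs C. tt i \<le> card (\<chi> ` ((\<lambda>f. cmp w f) ` HomS (\<A> i) Bs)))"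
    unfolding good_def by metis
  define M where "M = (\<Sum>i\<in>{1..n}. kk i) + 1"
  have kkM: "\<And>i. i \<in> {1..n} \<Longrightarrow> kk i < M"
  proof -
    fix i assume "i \<in> {1..n}"
    then have "kk i \<le> (\<Sum>i\<in>{1..n}. kk i)" by (intro member_le_sum) auto
    then show "kk i < M" unfolding M_def by simp
  qed
  define K where "K = max 2 ((n + 1) * M)"
  have UBs: "U Bs \<in> Ob" using UOb Bs by blast
  from ep UBs obtain D where D: "D \<in> Ob"
    and Dp: "\<forall>P\<in>ObS. \<forall>Q\<in>ObS. U P = U Bs \<longrightarrow> U Q = D \<longrightarrow> HomS P Q \<noteq> {}"
    unfolding expansion_property_def by blast
  have K2: "K \<ge> 2" unfolding K_def by simp
  from rp D K2 obtain C where C: "C \<in> Ob" and ra: "ramsey_arrow Hom cmp C D A K t"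
    unfolding ramsey_property_deg_def by blast
  from C UOb obtain Cs where Cs: "Cs \<in> ObS" and UCs: "U Cs = C" by blast
  from kk Cs have "\<forall>i\<in>{1..n}. \<exists>\<chi>::'m \<Rightarrow> nat. (\<forall>f\<in>HomS (\<A> i) Cs. \<chi> f < kk i) \<and>
      (\<forall>w\<in>HomS Bs Cs. tt i \<le> card (\<chi> ` ((\<lambda>f. cmp w f) ` HomS (\<A> i) Bs)))" by blast
  then obtain \<chi>s where c1: "\<forall>i\<in>{1..n}. \<forall>f\<in>HomS (\<A> i) Cs. \<chi>s i f < kk i"
    and c2: "\<forall>i\<in>{1..n}. \<forall>w\<in>HomS Bs Cs. tt i \<le> card (\<chi>s i ` ((\<lambda>f. cmp w f) ` HomS (\<A> i) Bs))"
    by metis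
  define \<chi> where "\<chi> e = (if \<exists>i\<in>{1..n}. e \<in> HomS (\<A> i) Cs then
      (let i = SOME i. i \<in> {1..n} \<and> e \<in> HomS (\<A> i) Cs in i * M + \<chi>s i e) else 0)" for e
  have uniq: "i = j" if i: "i \<in> {1..n}" and j: "j \<in> {1..n}" and ei: "e \<in> HomS (\<A> i) Cs"
    and ej: "e \<in> HomS (\<A> j) Cs" for i j e
  proof -
    have "\<A> i \<in> ObS" "U (\<A> i) = A" using AA i by auto
    then have "e \<in> Hom A (U Cs)" using sub ei Cs by blast
    then have "\<exists>!P. P \<in> ObS \<and> U P = A \<and> e \<in> HomS P Cs" using ur Cs A
      unfolding unique_restrictions_def by blast
    then have "\<A> i = \<A> j" using AA i j ei ej by blast
    then show "i = j" using inj i j unfolding inj_on_def by blast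
  qed
  have \<chi>eq: "\<chi> e = i * M + \<chi>s i e" if i: "i \<in> {1..n}" and e: "e \<in> HomS (\<A> i) Cs" for i e
  proof -
    have ex1: "\<exists>i. i \<in> {1..n} \<and> e \<in> HomS (\<A> i) Cs" using i e by blast
    have "(SOME i. i \<in> {1..n} \<and> e \<in> HomS (\<A> i) Cs) = i"
      using someI_ex[OF ex1] uniq i e by blast
    then show ?thesis unfolding \<chi>_def using i e by auto
  qed
  have bnd: "\<forall>f\<in>Hom A C. \<chi> f < K"
  proof
    fix f assume "f \<in> Hom A C"
    show "\<chi> f < K"
    proof (cases "\<exists>i\<in>{1..n}. f \<in> HomS (\<A> i) Cs")
      case True
      then obtain i where i: "i \<in> {1..n}" and fi: "f \<in> HomS (\<A> i) Cs" by blast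
      have "\<chi>s i f < M" using c1 kkM i fi by (meson less_trans)
      then have "i * M + \<chi>s i f < (i + 1) * M" by simp
      also have "\<dots> \<le> (n + 1) * M" using i by (intro mult_le_mono1) auto
      finally show ?thesis using \<chi>eq[OF i fi] unfolding K_def by simp
    next
      case False
      then show ?thesis unfolding \<chi>_def K_def by simp
    qed
  qed
  from ra bnd obtain w where w: "w \<in> Hom D C"
    and wc: "card (\<chi> ` ((\<lambda>f. cmp w f) ` Hom A D)) \<le> t"
    unfolding ramsey_arrow_def by blast
  have "w \<in> Hom D (U Cs)" using w UCs by simp
  then obtain Ds where Ds: "Ds \<in> ObS" and UDs: "U Ds = D" and wDs: "w \<in> HomS Ds Cs"
    using ur Cs D unfolding unique_restrictions_def by blast
  from Dp Bs Ds UDs obtain g where g: "g \<in> HomS Bs Ds" by blast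
  define wg where "wg = cmp w g"
  have wg: "wg \<in> HomS Bs Cs" unfolding wg_def using cat_comp[OF catS Bs Ds Cs g wDs] .
  define R where "R = \<chi> ` ((\<lambda>f. cmp w f) ` Hom A D)"
  have finR: "finite R"
  proof (rule finite_subset[of _ "{..<K}"])
    show "R \<subseteq> {..<K}" unfolding R_def using bnd cat_comp[OF cat A D C _ w] by auto
  qed simp
  define S where "S i = \<chi>s i ` ((\<lambda>f. cmp wg f) ` HomS (\<A> i) Bs)" for i
  define T where "T i = (\<lambda>c. i * M + c) ` S i" for i
  have SM: "\<forall>x\<in>S i. x < M" if i: "i \<in> {1..n}" for i
  proof
    fix x assume "x \<in> S i"
    then obtain f where f: "f \<in> HomS (\<A> i) Bs" and x: "x = \<chi>s i (cmp wg f)"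
      unfolding S_def by blast
    have "cmp wg f \<in> HomS (\<A> i) Cs" using cat_comp[OF catS _ Bs Cs f wg] AA i by blast
    then show "x < M" using c1 kkM i x by (meson less_trans)
  qed
  have TR: "T i \<subseteq> R" if i: "i \<in> {1..n}" for i
  proof
    fix x assume "x \<in> T i"
    then obtain f where f: "f \<in> HomS (\<A> i) Bs" and x: "x = i * M + \<chi>s i (cmp wg f)"
      unfolding T_def S_def by blast
    have Ai: "\<A> i \<in> ObS" "U (\<A> i) = A" using AA i by auto
    have e: "cmp wg f \<in> HomS (\<A> i) Cs" using cat_comp[OF catS Ai(1) Bs Cs f wg] .
    have eq: "cmp wg f = cmp w (cmp g f)"
      unfolding wg_def using cat_assoc[OF catS Ai(1) Bs Ds Cs f g wDs] by simp
    have gf: "cmp g f \<in> Hom A D" using cat_comp[OF catS Ai(1) Bs Ds f g] sub Ai Ds UDs by force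
    have "x = \<chi> (cmp w (cmp g f))" using x \<chi>eq[OF i e] eq by simp
    then show "x \<in> R" unfolding R_def using gf by blast
  qed
  have finT: "finite (T i)" if "i \<in> {1..n}" for i
    using TR[OF that] finR finite_subset by blast
  have cardT: "card (T i) = card (S i)" for i
    unfolding T_def by (rule card_image) (simp add: inj_on_def)
  have disj: "\<forall>i\<in>{1..n}. \<forall>j\<in>{1..n}. i \<noteq> j \<longrightarrow> T i \<inter> T j = {}"
  proof (intro ballI impI)
    fix i j assume i: "i \<in> {1..n}" and j: "j \<in> {1..n}" and ij: "i \<noteq> j"
    show "T i \<inter> T j = {}"
    proof (rule ccontr)
      assume "T i \<inter> T j \<noteq> {}"
      then obtain c d where c: "c \<in> S i" and d: "d \<in> S j" and eq: "i * M + c = j * M + d"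
        unfolding T_def by blast
      have "c < M" "d < M" using SM[OF i] SM[OF j] c d by auto
      then have "(i * M + c) div M = i" "(j * M + d) div M = j" by simp_all
      then show False using eq ij by simp
    qed
  qed
  have "(\<Sum>i\<in>{1..n}. tt i) \<le> (\<Sum>i\<in>{1..n}. card (S i))"
    using c2 wg unfolding S_def by (intro sum_mono) blast
  also have "\<dots> = (\<Sum>i\<in>{1..n}. card (T i))" using cardT by simp
  also have "\<dots> = card (\<Union>i\<in>{1..n}. T i)"
    using card_UN_disjoint[of "{1..n}" T] finT disj by simp
  also have "\<dots> \<le> card R" using TR finR by (intro card_mono) (auto, blast)
  also have "\<dots> \<le> t" using wc unfolding R_def .
  finally show ?thesis .
qed

theorem lemma6p2:
  fixes Ob :: "'o set" and Hom :: "'o \<Rightarrow> 'o \<Rightarrow> 'm set" and cmp :: "'m \<Rightarrow> 'm \<Rightarrow> 'm"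
    and idm :: "'o \<Rightarrow> 'm" and ObS :: "'p set" and HomS :: "'p \<Rightarrow> 'p \<Rightarrow> 'm set"
    and U :: "'p \<Rightarrow> 'o" and A :: 'o and n :: nat and \<A> :: "nat \<Rightarrow> 'p"
  assumes "expansion Ob Hom cmp idm ObS HomS U"
    and "reasonable Ob Hom ObS HomS U"
    and "unique_restrictions Ob Hom ObS HomS U"
    and "expansion_property Ob ObS HomS U"
    and "all_mono Ob Hom cmp"
    and "directed ObS HomS"
    and "A \<in> Ob"
    and "\<forall>i\<in>{1..n}. \<A> i \<in> ObS \<and> U (\<A> i) = A"
    and "inj_on \<A> {1..n}"
    and "\<forall>i\<in>{1..n}. small_ramsey_degree ObS HomS cmp (\<A> i) \<noteq> \<infinity>"
  shows "(\<Sum>i\<in>{1..n}. small_ramsey_degree ObS HomS cmp (\<A> i))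
           \<le> small_ramsey_degree Ob Hom cmp A"
proof -
  note ex = assms(1) and ur = assms(3) and ep = assms(4) and dir = assms(6) and A = assms(7)
    and AA = assms(8) and inj = assms(9) and fin = assms(10)
  have catS: "category ObS HomS cmp (\<lambda>P. idm (U P))" and UOb: "U ` ObS = Ob"
    using ex unfolding expansion_def by auto
  define tt where "tt i = the_enat (small_ramsey_degree ObS HomS cmp (\<A> i))" for i
  have tt: "small_ramsey_degree ObS HomS cmp (\<A> i) = enat (tt i)" if "i \<in> {1..n}" for i
    using fin that unfolding tt_def by (metis enat.exhaust the_enat.simps)
  have sum: "(\<Sum>i\<in>{1..n}. small_ramsey_degree ObS HomS cmp (\<A> i)) = enat (\<Sum>i\<in>{1..n}. tt i)"
  proof -
    have "(\<Sum>i\<in>{1..n}. small_ramsey_degree ObS HomS cmp (\<A> i)) = (\<Sum>i\<in>{1..n}. of_nat (tt i))"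
      using tt by (intro sum.cong) (auto simp: of_nat_eq_enat)
    also have "\<dots> = of_nat (\<Sum>i\<in>{1..n}. tt i)" by simp
    finally show ?thesis by (simp add: of_nat_eq_enat)
  qed
  have "\<forall>i\<in>{1..n}. \<exists>B\<in>ObS. good ObS HomS cmp (\<A> i) (tt i) B"
    using good_exists[OF catS] AA tt by blast
  then obtain B where B: "\<forall>i\<in>{1..n}. B i \<in> ObS \<and> good ObS HomS cmp (\<A> i) (tt i) (B i)"
    by metis
  have ne: "ObS \<noteq> {}" using A UOb by auto
  obtain Bs where Bs: "Bs \<in> ObS" and hB: "\<forall>i\<in>{1..n}. HomS (B i) Bs \<noteq> {}"
    using directed_upper[OF catS dir ne, of "{1..n}" B] B by auto
  have gd: "\<forall>i\<in>{1..n}. good ObS HomS cmp (\<A> i) (tt i) Bs"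
  proof
    fix i assume i: "i \<in> {1..n}"
    from hB i obtain h where h: "h \<in> HomS (B i) Bs" by blast
    show "good ObS HomS cmp (\<A> i) (tt i) Bs"
      using good_mono[OF catS _ _ Bs h] AA B i by blast
  qed
  show ?thesis
  proof (cases "\<exists>m>0. ramsey_property_deg Ob Hom cmp A m")
    case False
    then have "small_ramsey_degree Ob Hom cmp A = \<infinity>" unfolding small_ramsey_degree_def by simp
    then show ?thesis by simp
  next
    case True
    define t where "t = (LEAST m. m > 0 \<and> ramsey_property_deg Ob Hom cmp A m)"
    have rp: "ramsey_property_deg Ob Hom cmp A t"
      using LeastI_ex[OF True] unfolding t_def by blast
    have "(\<Sum>i\<in>{1..n}. tt i) \<le> t"
      using main_bound[OF ex ur ep A AA inj Bs gd rp] .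
    moreover have "small_ramsey_degree Ob Hom cmp A = enat t"
      unfolding small_ramsey_degree_def t_def using True by simp
    ultimately show ?thesis unfolding sum by simp
  qed
qed

end
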